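(* Let ${\bm X}$ be a finite set with a pseudometric $d_{\bm X}$, let $C(x,x')=d_{\bm X}(x,x')$, and let $m^{\bm X}_\bullet$ be an irreducible and aperiodic Markov transition kernel on ${\bm X}$. Then for any $\nu_1,\nu_2\in\mathcal{P}({\bm X})$, $$\lim_{k\to\infty}d^{(k)}_{\mathrm{WL}}\big(({\bm X},m^{\bm X}_\bullet,\nu_1),({\bm X},m^{\bm X}_\bullet,\nu_2);C\big)=0.$$
   Context: $\mathcal{C}(\alpha,\beta)$ denotes the set of couplings. For finite Markov chains $\mathcal{X}=({\bm X},m^{\bm X}_\bullet,\nu^{\bm X})$, $\mathcal{Y}=({\bm Y},m^{\bm Y}_\bullet,\nu^{\bm Y})$, a Markovian coupling is a (possibly time-inhomogeneous) Markov chain $(X_t,Y_t)_{t\in\mathbb{N}}$ on ${\bm X}\times{\bm Y}$ with $\mathrm{law}(X_0,Y_0)\in\mathcal{C}(\nu^{\bm X},\nu^{\bm Y})$ and, for all $t,x,y$, the conditional law of $(X_{t+1},Y_{t+1})$ given $(X_t,Y_t)=(x,y)$ in $\mathcal{C}(m^{\bm X}_x,m^{\bm Y}_y)$. $d^{(k)}_{\mathrm{WL}}(\mathcal{X},\mathcal{Y};C)=\inf\mathbb{E}\,C(X_k,Y_k)$ over all Markovian couplings. *)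

theory Defs
  imports "HOL-Probability.Probability"
begin

definition couplings :: "'a pmf \<Rightarrow> 'b pmf \<Rightarrow> ('a \<times> 'b) pmf set" where
  "couplings \<alpha> \<beta> = {\<mu>. map_pmf fst \<mu> = \<alpha> \<and> map_pmf snd \<mu> = \<beta>}"

primrec chain_law :: "'s pmf \<Rightarrow> (nat \<Rightarrow> 's \<Rightarrow> 's pmf) \<Rightarrow> nat \<Rightarrow> 's pmf" where
  "chain_law \<mu>0 K 0 = \<mu>0"
| "chain_law \<mu>0 K (Suc t) = bind_pmf (chain_law \<mu>0 K t) (K t)"

definition markovian_coupling ::
  "('a \<Rightarrow> 'a pmf) \<Rightarrow> 'a pmf \<Rightarrow> ('b \<Rightarrow> 'b pmf) \<Rightarrow> 'b pmf
   \<Rightarrow> ('a \<times> 'b) pmf \<Rightarrow> (nat \<Rightarrow> 'a \<times> 'b \<Rightarrow> ('a \<times> 'b) pmf) \<Rightarrow> bool" where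
  "markovian_coupling mX \<nu>X mY \<nu>Y \<mu>0 K \<longleftrightarrow>
     \<mu>0 \<in> couplings \<nu>X \<nu>Y \<and> (\<forall>t x y. K t (x, y) \<in> couplings (mX x) (mY y))"

definition dWL ::
  "nat \<Rightarrow> ('a \<Rightarrow> 'a pmf) \<Rightarrow> 'a pmf \<Rightarrow> ('b \<Rightarrow> 'b pmf) \<Rightarrow> 'b pmf \<Rightarrow> ('a \<Rightarrow> 'b \<Rightarrow> real) \<Rightarrow> real" where
  "dWL k mX \<nu>X mY \<nu>Y C =
     (INF p \<in> {(\<mu>0, K). markovian_coupling mX \<nu>X mY \<nu>Y \<mu>0 K}.
        measure_pmf.expectation (chain_law (fst p) (snd p) k) (\<lambda>(x, y). C x y))"

primrec mstep :: "('a \<Rightarrow> 'a pmf) \<Rightarrow> nat \<Rightarrow> 'a \<Rightarrow> 'a pmf" where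
  "mstep m 0 x = return_pmf x"
| "mstep m (Suc n) x = bind_pmf (mstep m n x) m"

definition irreducible_kernel :: "('a \<Rightarrow> 'a pmf) \<Rightarrow> bool" where
  "irreducible_kernel m \<longleftrightarrow> (\<forall>x y. \<exists>n. pmf (mstep m n x) y > 0)"

definition aperiodic_kernel :: "('a \<Rightarrow> 'a pmf) \<Rightarrow> bool" where
  "aperiodic_kernel m \<longleftrightarrow> (\<forall>x. Gcd {n. n \<ge> 1 \<and> pmf (mstep m n x) x > 0} = (1::nat))"

definition pseudometric :: "('a \<Rightarrow> 'a \<Rightarrow> real) \<Rightarrow> bool" where
  "pseudometric d \<longleftrightarrow> (\<forall>x. d x x = 0) \<and> (\<forall>x y. d x y \<ge> 0) \<and> (\<forall>x y. d x y = d y x)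
     \<and> (\<forall>x y z. d x z \<le> d x y + d y z)"

end

theory Submission
  imports Defs
begin

lemma measure_bind_pmf_real:
  "measure (measure_pmf (bind_pmf M N)) A = (\<integral>x. measure (measure_pmf (N x)) A \<partial>measure_pmf M)"
proof -
  have "ennreal (measure (measure_pmf (bind_pmf M N)) A) = emeasure (measure_pmf (bind_pmf M N)) A"
    by (simp add: measure_pmf.emeasure_eq_measure)
  also have "\<dots> = (\<integral>\<^sup>+x. ennreal (measure (measure_pmf (N x)) A) \<partial>measure_pmf M)"
    by (subst emeasure_bind_pmf) (simp add: measure_pmf.emeasure_eq_measure)
  also have "\<dots> = ennreal (\<integral>x. measure (measure_pmf (N x)) A \<partial>measure_pmf M)"
    by (rule nn_integral_eq_integral) (auto intro!: measure_pmf.integrable_const_bound[where B=1])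
  finally show ?thesis by (simp add: integral_nonneg_AE)
qed

lemma mstep_add: "mstep m (a+b) x = bind_pmf (mstep m a x) (mstep m b)"
  by (induction b) (auto simp: bind_return_pmf' bind_assoc_pmf)

lemma chain_law_add: "chain_law \<mu> (\<lambda>_. K) (a+b) = chain_law (chain_law \<mu> (\<lambda>_. K) a) (\<lambda>_. K) b"
  by (induction b) auto

lemma chain_law_bind: "chain_law \<mu> (\<lambda>_. K) n = bind_pmf \<mu> (\<lambda>s. chain_law (return_pmf s) (\<lambda>_. K) n)"
  by (induction n) (auto simp: bind_return_pmf' bind_assoc_pmf)

lemma semigroup_cofinite:
  fixes S :: "nat set"
  assumes pos: "\<And>a. a\<in>S \<Longrightarrow> a>0" and add: "\<And>a b. a\<in>S \<Longrightarrow> b\<in>S \<Longrightarrow> a+b\<in>S"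
    and g: "Gcd S = 1"
  shows "\<exists>N. \<forall>n\<ge>N. n\<in>S"
proof -
  define S0 where "S0 = insert 0 S"
  have add0: "a+b \<in> S0" if "a \<in> S0" "b \<in> S0" for a b
    using that add by (auto simp: S0_def)
  have mult0: "k*a \<in> S0" if "a \<in> S0" for a k
  proof (induction k)
    case 0 show ?case by (simp add: S0_def)
  next
    case (Suc k) then show ?case using add0[OF that Suc.IH] by simp
  qed
  have "S \<noteq> {}" using g by auto
  then obtain s0 where s0: "s0 \<in> S" by auto
  define D where "D = {d::nat. d > 0 \<and> (\<exists>a\<in>S0. \<exists>b\<in>S0. a = b + d)}"
  have "s0 \<in> D" using s0 pos by (auto simp: D_def S0_def)
  define g where "g = (LEAST d. d \<in> D)"
  have gD: "g \<in> D" unfolding g_def using \<open>s0 \<in> D\<close> by (rule LeastI)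
  then obtain p q where pq: "p \<in> S0" "q \<in> S0" "p = q + g" "g > 0" by (auto simp: D_def)
  have gdvd: "g dvd s" if "s \<in> S" for s
  proof (rule ccontr)
    assume nd: "\<not> g dvd s"
    define r where "r = s mod g"
    define k where "k = s div g"
    have r0: "r > 0" using nd by (simp add: r_def dvd_eq_mod_eq_0)
    have rl: "r < g" using pq by (simp add: r_def)
    have s: "s = k*g + r" by (simp add: r_def k_def)
    have "s + k*q = k*p + r" using s pq by (simp add: algebra_simps)
    moreover have "s + k*q \<in> S0" using that mult0[OF pq(2), of k] by (intro add0) (auto simp: S0_def)
    moreover have "k*p \<in> S0" using mult0[OF pq(1)] .
    ultimately have "r \<in> D" using r0 by (auto simp: D_def)
    hence "g \<le> r" unfolding g_def by (rule Least_le)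
    with rl show False by simp
  qed
  have "g dvd Gcd S" by (rule Gcd_greatest) (use gdvd in auto)
  hence g1: "g = 1" using g by simp
  show ?thesis
  proof (rule exI[of _ "q*q+1"], intro allI impI)
    fix n assume n: "q*q+1 \<le> n"
    show "n \<in> S"
    proof (cases "q = 0")
      case True
      hence "1 \<in> S" using pq g1 by (auto simp: S0_def)
      hence "n*1 \<in> S0" by (intro mult0) (auto simp: S0_def)
      thus ?thesis using n by (auto simp: S0_def)
    next
      case False
      define a where "a = n div q"
      define r where "r = n mod q"
      have r: "r < q" using False by (simp add: r_def)
      have nq: "n = a*q + r" by (simp add: a_def r_def)
      have "a \<ge> q"
      proof (rule ccontr)
        assume "\<not> q \<le> a"
        hence "a*q + r \<le> (q-1)*q + (q - 1)" using r by (intro add_mono mult_right_mono) auto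
        also have "\<dots> < q*q + 1" using False by (cases q) (auto simp: algebra_simps)
        finally show False using n nq by simp
      qed
      have "n = (a - r)*q + r*p" using nq pq g1 r \<open>a \<ge> q\<close>
        by (simp add: algebra_simps diff_mult_distrib)
      moreover have "(a - r)*q + r*p \<in> S0" by (intro add0 mult0 pq)
      ultimately show ?thesis using n by (auto simp: S0_def)
    qed
  qed
qed

lemma pos_iff_set: "pmf M x > 0 \<longleftrightarrow> x \<in> set_pmf M"
  by (simp add: set_pmf_iff order_less_le)

definition coal :: "('a \<Rightarrow> 'a pmf) \<Rightarrow> 'a \<times> 'a \<Rightarrow> ('a \<times> 'a) pmf" where
  "coal m s = (if fst s = snd s then map_pmf (\<lambda>z. (z,z)) (m (fst s))
               else pair_pmf (m (fst s)) (m (snd s)))"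

lemma coal_coupling: "coal m (x,y) \<in> couplings (m x) (m y)"
  by (auto simp: coal_def couplings_def map_fst_pair_pmf map_snd_pair_pmf pmf.map_comp o_def)

definition cP :: "('a \<Rightarrow> 'a pmf) \<Rightarrow> 'a \<times> 'a \<Rightarrow> nat \<Rightarrow> ('a \<times> 'a) pmf" where
  "cP m s n = chain_law (return_pmf s) (\<lambda>_. coal m) n"

lemma cP_Suc: "cP m s (Suc n) = bind_pmf (cP m s n) (coal m)"
  by (simp add: cP_def)

lemma cP_0: "cP m s 0 = return_pmf s"
  by (simp add: cP_def)

lemma diag_absorb: "set_pmf (cP m (w,w) n) \<subseteq> {s. fst s = snd s}"
proof (induction n)
  case 0 then show ?case by (simp add: cP_0)
next
  case (Suc n)
  show ?case
  proof
    fix s assume "s \<in> set_pmf (cP m (w,w) (Suc n))"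
    then obtain t where t: "t \<in> set_pmf (cP m (w,w) n)" "s \<in> set_pmf (coal m t)"
      by (auto simp: cP_Suc)
    with Suc have "fst t = snd t" by auto
    with t show "s \<in> {s. fst s = snd s}" by (auto simp: coal_def)
  qed
qed

lemma support:
  "u \<in> set_pmf (mstep m n x) \<Longrightarrow> v \<in> set_pmf (mstep m n y) \<Longrightarrow>
   (u,v) \<in> set_pmf (cP m (x,y) n) \<or> (\<exists>w. (w,w) \<in> set_pmf (cP m (x,y) n))"
proof (induction n arbitrary: u v)
  case 0 then show ?case by (simp add: cP_0)
next
  case (Suc n)
  from Suc.prems obtain a where a: "a \<in> set_pmf (mstep m n x)" "u \<in> set_pmf (m a)" by auto
  from Suc.prems obtain b where b: "b \<in> set_pmf (mstep m n y)" "v \<in> set_pmf (m b)" by auto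
  from Suc.IH[OF a(1) b(1)] show ?case
  proof
    assume ab: "(a,b) \<in> set_pmf (cP m (x,y) n)"
    show ?thesis
    proof (cases "a = b")
      case True
      hence "(u,u) \<in> set_pmf (coal m (a,b))" using a by (auto simp: coal_def)
      thus ?thesis using ab by (auto simp: cP_Suc)
    next
      case False
      hence "(u,v) \<in> set_pmf (coal m (a,b))" using a b by (auto simp: coal_def)
      thus ?thesis using ab by (auto simp: cP_Suc)
    qed
  next
    assume "\<exists>w. (w,w) \<in> set_pmf (cP m (x,y) n)"
    then obtain w where w: "(w,w) \<in> set_pmf (cP m (x,y) n)" by auto
    obtain z where z: "z \<in> set_pmf (m w)" using set_pmf_not_empty by fast
    hence "(z,z) \<in> set_pmf (coal m (w,w))" by (auto simp: coal_def)
    thus ?thesis using w by (auto simp: cP_Suc)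
  qed
qed

definition offd :: "('a \<times> 'a) set" where "offd = {s. fst s \<noteq> snd s}"

lemma q_add: "measure (measure_pmf (cP m s (a+b))) offd
   = (\<integral>s'. measure (measure_pmf (cP m s' b)) offd \<partial>measure_pmf (cP m s a))"
  unfolding cP_def chain_law_add
  by (subst chain_law_bind) (rule measure_bind_pmf_real)

lemma q_diag: "fst s = snd s \<Longrightarrow> measure (measure_pmf (cP m s n)) offd = 0"
  using diag_absorb[of m "fst s" n]
  by (cases s) (auto simp: measure_pmf_zero_iff offd_def)

theorem lemma25:
  fixes d :: "'a::finite \<Rightarrow> 'a \<Rightarrow> real" and m :: "'a \<Rightarrow> 'a pmf" and \<nu>1 \<nu>2 :: "'a pmf"
  assumes "pseudometric d"
    and "irreducible_kernel m"
    and "aperiodic_kernel m"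
  shows "(\<lambda>k. dWL k m \<nu>1 m \<nu>2 d) \<longlonglongrightarrow> 0"
proof -
  have d0: "d x x = 0" and dnn: "d x y \<ge> 0" for x y
    using assms(1) by (auto simp: pseudometric_def)
  have "\<exists>N. \<forall>n\<ge>N. x \<in> set_pmf (mstep m n x)" for x
  proof -
    let ?S = "{n. n \<ge> 1 \<and> pmf (mstep m n x) x > 0}"
    have "\<exists>N. \<forall>n\<ge>N. n \<in> ?S"
    proof (rule semigroup_cofinite)
      fix a b assume "a \<in> ?S" "b \<in> ?S"
      thus "a + b \<in> ?S" by (auto simp: pos_iff_set mstep_add)
    next
      show "Gcd ?S = 1" using assms(3) by (simp add: aperiodic_kernel_def)
    qed auto
    thus ?thesis by (auto simp: pos_iff_set)
  qed
  then obtain Nx where Nx: "\<And>x n. n \<ge> Nx x \<Longrightarrow> x \<in> set_pmf (mstep m n x)" by metis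
  have "\<exists>n. y \<in> set_pmf (mstep m n x)" for x y
    using assms(2) by (auto simp: irreducible_kernel_def pos_iff_set)
  hence "\<forall>p. \<exists>n. snd p \<in> set_pmf (mstep m n (fst p))" by blast
  then obtain R0 where R0: "\<forall>p. snd p \<in> set_pmf (mstep m (R0 p) (fst p))" by (metis choice)
  define R where "R x y = R0 (x,y)" for x y
  have R: "y \<in> set_pmf (mstep m (R x y) x)" for x y using R0[rule_format, of "(x,y)"] by (simp add: R_def)
  define T where "T = Max (range Nx) + Max (range (case_prod R)) + 1"
  have TN: "Nx x \<le> T" for x
    unfolding T_def using Max_ge[of "range Nx" "Nx x"] by (simp add: le_SucI trans_le_add1)
  have TR: "R x y + Nx y \<le> T" for x y
  proof -
    have "R x y \<in> range (case_prod R)" by (rule image_eqI[of _ _ "(x,y)"]) auto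
    hence "R x y \<le> Max (range (case_prod R))" by (intro Max_ge) auto
    moreover have "Nx y \<le> Max (range Nx)" by (intro Max_ge) auto
    ultimately show ?thesis unfolding T_def by linarith
  qed
  have T1: "T \<ge> 1" by (simp add: T_def)
  have common: "x \<in> set_pmf (mstep m T y)" for x y
  proof -
    have e: "mstep m T y = bind_pmf (mstep m (R y x) y) (mstep m (T - R y x))"
      using mstep_add[of m "R y x" "T - R y x" y] TR[of y x] by simp
    have "x \<in> set_pmf (mstep m (T - R y x) x)" using TR[of y x] by (intro Nx) simp
    then show ?thesis unfolding e using R[where x=y and y=x] by auto
  qed
  define q where "q s n = measure (measure_pmf (cP m s n)) offd" for s n
  have q_nn: "q s n \<ge> 0" for s n by (simp add: q_def)
  have q_le1: "q s n \<le> 1" for s n by (simp add: q_def)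
  have qT: "q s T < 1" for s
  proof -
    obtain x y where s: "s = (x,y)" by (cases s)
    from support[OF common[of x x] common[of x y]]
    obtain w where w: "(w,w) \<in> set_pmf (cP m s T)" using s by auto
    have "q s T \<le> measure (measure_pmf (cP m s T)) (UNIV - {(w,w)})"
      unfolding q_def by (rule measure_pmf.finite_measure_mono) (auto simp: offd_def)
    also have "\<dots> = 1 - pmf (cP m s T) (w,w)"
      using measure_pmf.prob_compl[of "{(w,w)}" "cP m s T"] by (simp add: measure_pmf_single)
    also have "\<dots> < 1" using w by (simp add: pos_iff_set[symmetric])
    finally show ?thesis .
  qed
  define c where "c = Max (range (\<lambda>s. q s T))"
  have c1: "c < 1" unfolding c_def using qT by (subst Max_less_iff) auto
  have qc: "q s T \<le> c" for s unfolding c_def by (rule Max_ge) auto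
  have c0: "c \<ge> 0" using q_nn[of undefined T] qc[of undefined] by linarith
  have bound: "q s (j*T + r) \<le> c^j" for j r s
  proof (induction j arbitrary: s)
    case 0 then show ?case using q_le1 by simp
  next
    case (Suc j)
    have "q s (Suc j * T + r) = q s (T + (j*T + r))" by (simp add: algebra_simps)
    also have "\<dots> = (\<integral>s'. q s' (j*T + r) \<partial>measure_pmf (cP m s T))"
      unfolding q_def by (rule q_add)
    also have "\<dots> \<le> (\<integral>s'. c^j * indicator offd s' \<partial>measure_pmf (cP m s T))"
    proof (rule integral_mono)
      fix s' :: "'a \<times> 'a"
      show "q s' (j*T + r) \<le> c^j * indicator offd s'"
        using Suc.IH[of s'] q_diag[of s' m] by (cases "s' \<in> offd") (auto simp: q_def offd_def)
    qed (auto intro: integrable_measure_pmf_finite)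
    also have "\<dots> = c^j * q s T" by (simp add: q_def)
    also have "\<dots> \<le> c^j * c" using qc c0 by (intro mult_left_mono) auto
    finally show ?case by (simp add: mult.commute)
  qed
  have qk: "q s k \<le> c^(k div T)" for s k
    using bound[of s "k div T" "k mod T"] by simp
  define D where "D = Max (range (case_prod d))"
  have dD: "d x y \<le> D" for x y unfolding D_def by (rule Max_ge) auto
  have D0: "D \<ge> 0" using dD[of undefined undefined] d0 by simp
  define \<mu>0 where "\<mu>0 = pair_pmf \<nu>1 \<nu>2"
  have mc: "markovian_coupling m \<nu>1 m \<nu>2 \<mu>0 (\<lambda>_. coal m)"
    using coal_coupling[of m] by (auto simp: markovian_coupling_def \<mu>0_def)
      (auto simp: couplings_def map_fst_pair_pmf map_snd_pair_pmf)
  have val: "measure_pmf.expectation (chain_law \<mu>0 (\<lambda>_. coal m) k) (\<lambda>(x, y). d x y)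
      \<le> D * c^(k div T)" for k
  proof -
    have "measure_pmf.expectation (chain_law \<mu>0 (\<lambda>_. coal m) k) (\<lambda>(x, y). d x y)
       \<le> (\<integral>s. D * indicator offd s \<partial>measure_pmf (chain_law \<mu>0 (\<lambda>_. coal m) k))"
    proof (rule integral_mono)
      fix s :: "'a \<times> 'a"
      show "(case s of (x, y) \<Rightarrow> d x y) \<le> D * indicator offd s"
        using dD d0 by (cases s) (auto simp: offd_def indicator_def)
    qed (auto intro: integrable_measure_pmf_finite)
    also have "\<dots> = D * measure (measure_pmf (chain_law \<mu>0 (\<lambda>_. coal m) k)) offd" by simp
    also have "measure (measure_pmf (chain_law \<mu>0 (\<lambda>_. coal m) k)) offd
        = (\<integral>s. q s k \<partial>measure_pmf \<mu>0)"
      unfolding q_def cP_def by (subst chain_law_bind) (rule measure_bind_pmf_real)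
    also have "\<dots> \<le> (\<integral>s. c^(k div T) \<partial>measure_pmf \<mu>0)"
      by (rule integral_mono) (auto intro: integrable_measure_pmf_finite qk)
    also have "\<dots> = c^(k div T)" by simp
    finally show ?thesis using D0 by (simp add: mult_left_mono)
  qed
  have up: "dWL k m \<nu>1 m \<nu>2 d \<le> D * c^(k div T)" for k
    unfolding dWL_def
  proof (rule cINF_lower2[where x="(\<mu>0, \<lambda>_. coal m)"])
    show "bdd_below ((\<lambda>p. measure_pmf.expectation (chain_law (fst p) (snd p) k) (\<lambda>(x, y). d x y)) `
        {(\<mu>0, K). markovian_coupling m \<nu>1 m \<nu>2 \<mu>0 K})"
      by (rule bdd_belowI[where m=0]) (auto intro!: integral_nonneg_AE simp: dnn)
  qed (use mc val in auto)
  have lo: "0 \<le> dWL k m \<nu>1 m \<nu>2 d" for k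
    unfolding dWL_def
    by (rule cINF_greatest) (use mc in \<open>auto intro!: integral_nonneg_AE simp: dnn\<close>)
  have lim1: "filterlim (\<lambda>k. k div T) at_top sequentially"
    unfolding filterlim_at_top
  proof (intro allI)
    fix Z show "eventually (\<lambda>k. Z \<le> k div T) sequentially"
      using T1 by (intro eventually_sequentiallyI[of "Z*T"]) (simp add: less_eq_div_iff_mult_less_eq)
  qed
  have "(\<lambda>k. c^(k div T)) \<longlonglongrightarrow> 0"
    using filterlim_compose[OF LIMSEQ_power_zero[of c] lim1] c0 c1 by simp
  hence lim2: "(\<lambda>k. D * c^(k div T)) \<longlonglongrightarrow> 0"
    using tendsto_mult_right_zero by blast
  show ?thesis
    by (rule tendsto_sandwich[of "\<lambda>_. 0" _ _ "\<lambda>k. D * c^(k div T)", OF _ _ tendsto_const lim2])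
      (use lo up in auto)
qed

end
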